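(* There is a constant $c>0$ such that $\mathbb E K_{n,1}\le c\,\Phi(n)$ for all $n\in\mathbb N$.
   Context: Let $\nu$ be a nonzero measure on $(0,1)$ with $\int_0^1x\,\nu(dx)<\infty$; for $1\le k\le m$ let $\lambda_{m,k}=\int_0^1x^k(1-x)^{m-k}\nu(dx)$, $\varphi_{m,k}=\binom mk\lambda_{m,k}$, $\Phi(z)=\int_0^1(1-(1-x)^z)\nu(dx)$. Let $N_n^*$ be the nonincreasing continuous-time Markov chain started at $n$ which jumps from $m$ to $m-k$ at rate $\varphi_{m,k}$, $1\le k\le m$, absorbed at $0$. $K_{n,1}$ is the number of jumps of size exactly $1$ made by $N_n^*$ on its way from $n$ to $0$. *)

theory Defs
  imports "HOL-Probability.Probability"
begin

definition lam :: "real measure \<Rightarrow> nat \<Rightarrow> nat \<Rightarrow> real" where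
  "lam \<nu> m k = (\<integral>x. x ^ k * (1 - x) ^ (m - k) \<partial>\<nu>)"

text \<open>\<phi>_{m,k} = binom(m,k) \<lambda>_{m,k}: rate of the jump m \<rightarrow> m-k\<close>
definition phi :: "real measure \<Rightarrow> nat \<Rightarrow> nat \<Rightarrow> real" where
  "phi \<nu> m k = real (m choose k) * lam \<nu> m k"

definition Phi :: "real measure \<Rightarrow> nat \<Rightarrow> real" where
  "Phi \<nu> n = (\<integral>x. 1 - (1 - x) ^ n \<partial>\<nu>)"

definition qrate :: "real measure \<Rightarrow> nat \<Rightarrow> real" where
  "qrate \<nu> m = (\<Sum>k=1..m. phi \<nu> m k)"

text \<open>Law of the size of the next jump of the chain from state m (embedded jump chain):
  jump of size k with probability \<phi>_{m,k} / q_m, 1 \<le> k \<le> m.\<close>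
definition jump_pmf :: "real measure \<Rightarrow> nat \<Rightarrow> nat pmf" where
  "jump_pmf \<nu> m = embed_pmf (\<lambda>k. if 1 \<le> k \<and> k \<le> m then phi \<nu> m k / qrate \<nu> m else 0)"

text \<open>Law of the sequence of jump sizes made by N*_m on its way from m to 0.\<close>
function jumps_pmf :: "real measure \<Rightarrow> nat \<Rightarrow> nat list pmf" where
  "jumps_pmf \<nu> m =
     (if m = 0 then return_pmf []
      else bind_pmf (jump_pmf \<nu> m) (\<lambda>k. map_pmf (Cons k) (jumps_pmf \<nu> (m - max 1 k))))"
  by auto
termination by (relation "Wellfounded.measure (\<lambda>(_, m). m)") auto

definition EK1 :: "real measure \<Rightarrow> nat \<Rightarrow> real" where
  "EK1 \<nu> n = measure_pmf.expectation (jumps_pmf \<nu> n) (\<lambda>ks. real (length (filter (\<lambda>k. k = 1) ks)))"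

end

theory Submission
  imports Defs
begin

lemma one_minus_pow_ge:
  fixes a :: real
  assumes "0 \<le> a" "a \<le> 1" "1 \<le> k"
  shows "real k * (1 - a) * a ^ (k - 1) \<le> 1 - a ^ k"
  using assms(3)
proof (induction k rule: dec_induct)
  case base then show ?case by simp
next
  case (step k)
  have "a ^ k \<le> a ^ (k - 1)"
    using assms step.hyps by (intro power_decreasing) auto
  then have "real k * (1 - a) * a ^ k \<le> real k * (1 - a) * a ^ (k - 1)"
    using assms by (intro mult_left_mono) auto
  moreover have "1 - a ^ Suc k = (1 - a ^ k) + a ^ k * (1 - a)" by (simp add: algebra_simps)
  ultimately show ?case using step.IH by (simp add: algebra_simps)
qed

lemma pow_diff_ge:
  fixes a :: real
  assumes "0 \<le> a" "a \<le> 1" "k \<le> m"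
  shows "real k * (1 - a) * a ^ (m - 1) \<le> a ^ (m - k) - a ^ m"
proof (cases "k = 0")
  case True then show ?thesis by simp
next
  case False
  have e: "a ^ m = a ^ (m - k) * a ^ k" using assms by (simp add: power_add[symmetric])
  have e2: "a ^ (m - 1) = a ^ (m - k) * a ^ (k - 1)" using assms False by (simp add: power_add[symmetric])
  have "a ^ (m - k) * (real k * (1 - a) * a ^ (k - 1)) \<le> a ^ (m - k) * (1 - a ^ k)"
    using one_minus_pow_ge[of a k] assms False by (intro mult_left_mono) auto
  then show ?thesis unfolding e e2 by (simp add: algebra_simps)
qed

lemma binom_mean:
  fixes x :: real
  shows "(\<Sum>k=1..m. real k * real (m choose k) * (x ^ k * (1 - x) ^ (m - k))) = real m * x"
proof (cases m)
  case 0 then show ?thesis by simp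
next
  case (Suc n)
  have "(\<Sum>k=1..Suc n. real k * real (Suc n choose k) * (x ^ k * (1 - x) ^ (Suc n - k)))
      = (\<Sum>j=0..n. real (Suc j) * real (Suc n choose Suc j) * (x ^ Suc j * (1 - x) ^ (n - j)))"
    unfolding One_nat_def sum.shift_bounds_cl_Suc_ivl by simp
  also have "\<dots> = (\<Sum>j=0..n. real (Suc n) * x * (real (n choose j) * x ^ j * (1 - x) ^ (n - j)))"
  proof (rule sum.cong[OF refl])
    fix j
    have "real (Suc j) * real (Suc n choose Suc j) = real (Suc n) * real (n choose j)"
      using Suc_times_binomial[of j n] by (metis of_nat_mult)
    then show "real (Suc j) * real (Suc n choose Suc j) * (x ^ Suc j * (1 - x) ^ (n - j))
      = real (Suc n) * x * (real (n choose j) * x ^ j * (1 - x) ^ (n - j))"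
      by (simp add: algebra_simps)
  qed
  also have "\<dots> = real (Suc n) * x * (x + (1 - x)) ^ n"
    by (simp only: binomial_ring[of x "1 - x" n] sum_distrib_left atLeast0AtMost)
  finally show ?thesis using Suc by simp
qed

declare jumps_pmf.simps[simp del]

locale nuctx =
  fixes \<nu> :: "real measure"
  assumes S: "sets \<nu> = sets borel"
    and N: "emeasure \<nu> (- {0<..<1}) = 0"
    and P: "emeasure \<nu> {0<..<1} \<noteq> 0"
    and I: "(\<integral>\<^sup>+ x. ennreal x \<partial>\<nu>) < \<infinity>"
begin

lemma AE01: "AE x in \<nu>. 0 < x \<and> x < 1"
proof (rule AE_I'[of "- {0<..<1}"])
  have "- {0<..<1::real} \<in> sets borel" by simp
  then show "- {0<..<1} \<in> null_sets \<nu>" using N S by (simp add: null_sets_def)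
qed auto

lemma meas: "f \<in> borel_measurable borel \<Longrightarrow> f \<in> borel_measurable \<nu>"
  using measurable_cong_sets[OF S refl] by blast

lemma intx: "integrable \<nu> (\<lambda>x. x)"
proof (rule integrableI_nonneg)
  show "(\<lambda>x. x) \<in> borel_measurable \<nu>" by (rule meas) simp
  show "AE x in \<nu>. 0 \<le> x" using AE01 by eventually_elim auto
qed (use I in auto)

lemma int_bound:
  fixes f :: "real \<Rightarrow> real"
  assumes "f \<in> borel_measurable borel" "AE x in \<nu>. 0 < x \<and> x < 1 \<longrightarrow> \<bar>f x\<bar> \<le> C * x"
  shows "integrable \<nu> f"
proof -
  have 1: "integrable \<nu> (\<lambda>x. C * x)" using intx by simp
  have 2: "f \<in> borel_measurable \<nu>" using assms meas by blast
  have 3: "AE x in \<nu>. norm (f x) \<le> norm (C * x)"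
    using AE01 assms(2) by eventually_elim auto
  show ?thesis by (rule Bochner_Integration.integrable_bound[OF 1 2 3])
qed

lemma int_pos:
  fixes f :: "real \<Rightarrow> real"
  assumes "integrable \<nu> f" "AE x in \<nu>. 0 < x \<and> x < 1 \<longrightarrow> 0 < f x"
  shows "0 < integral\<^sup>L \<nu> f"
proof -
  have nn: "AE x in \<nu>. 0 \<le> f x" using AE01 assms(2) by eventually_elim auto
  have "integral\<^sup>L \<nu> f \<noteq> 0"
  proof
    assume "integral\<^sup>L \<nu> f = 0"
    then have "AE x in \<nu>. f x = 0" using integral_nonneg_eq_0_iff_AE[OF assms(1) nn] by simp
    then have "AE x in \<nu>. False" using AE01 assms(2) by eventually_elim auto
    then obtain Z where Z: "{x\<in>space \<nu>. \<not> False} \<subseteq> Z" "emeasure \<nu> Z = 0" "Z \<in> sets \<nu>" by (rule AE_E)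
    have "emeasure \<nu> {0<..<1} \<le> emeasure \<nu> Z"
      by (rule emeasure_mono) (use Z sets_eq_imp_space_eq[OF S] in auto)
    then show False using P Z by simp
  qed
  moreover have "0 \<le> integral\<^sup>L \<nu> f" using nn by (rule integral_nonneg_AE)
  ultimately show ?thesis by simp
qed

lemma int_mono:
  fixes f g :: "real \<Rightarrow> real"
  assumes "f \<in> borel_measurable borel" "g \<in> borel_measurable borel"
    "\<And>x. 0 < x \<Longrightarrow> x < 1 \<Longrightarrow> \<bar>f x\<bar> \<le> C * x"
    "\<And>x. 0 < x \<Longrightarrow> x < 1 \<Longrightarrow> \<bar>g x\<bar> \<le> D * x"
    "\<And>x. 0 < x \<Longrightarrow> x < 1 \<Longrightarrow> f x \<le> g x"
  shows "integral\<^sup>L \<nu> f \<le> integral\<^sup>L \<nu> g"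
  by (rule integral_mono_AE) (use assms AE01 in \<open>auto intro!: int_bound elim: AE_mp\<close>)

lemma int_lam: "1 \<le> k \<Longrightarrow> integrable \<nu> (\<lambda>x. x ^ k * (1 - x) ^ (m - k))"
proof (rule int_bound[where C=1])
  assume k: "1 \<le> k"
  show "AE x in \<nu>. 0 < x \<and> x < 1 \<longrightarrow> \<bar>x ^ k * (1 - x) ^ (m - k)\<bar> \<le> 1 * x"
  proof (intro AE_I2 impI)
    fix x :: real assume x: "0 < x \<and> x < 1"
    have "x ^ k * (1 - x) ^ (m - k) \<le> x ^ k * 1"
      using x by (intro mult_left_mono power_le_one) auto
    also have "x ^ k \<le> x ^ 1" using x k by (intro power_decreasing) auto
    finally show "\<bar>x ^ k * (1 - x) ^ (m - k)\<bar> \<le> 1 * x" using x by simp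
  qed
qed measurable

lemma int_Phi: "integrable \<nu> (\<lambda>x. 1 - (1 - x) ^ n)"
proof (rule int_bound[where C="real n"])
  show "AE x in \<nu>. 0 < x \<and> x < 1 \<longrightarrow> \<bar>1 - (1 - x) ^ n\<bar> \<le> real n * x"
  proof (intro AE_I2 impI)
    fix x :: real assume x: "0 < x \<and> x < 1"
    have "1 + real n * (- x) \<le> (1 + - x) ^ n" using x by (intro Bernoulli_inequality) auto
    moreover have "(1 - x) ^ n \<le> 1" using x by (intro power_le_one) auto
    ultimately show "\<bar>1 - (1 - x) ^ n\<bar> \<le> real n * x" by simp
  qed
qed measurable

lemma lam_nonneg: "0 \<le> lam \<nu> m k"
  unfolding lam_def by (rule integral_nonneg_AE) (use AE01 in \<open>auto elim: AE_mp\<close>)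

lemma phi_nonneg: "0 \<le> phi \<nu> m k"
  unfolding phi_def using lam_nonneg by simp

lemma Phi1: "Phi \<nu> 1 = integral\<^sup>L \<nu> (\<lambda>x. x)"
  unfolding Phi_def by simp

lemma Phi1_pos: "0 < Phi \<nu> 1"
  unfolding Phi1 by (rule int_pos[OF intx]) auto

lemma lam1_pos: "0 < lam \<nu> m 1"
  unfolding lam_def by (rule int_pos[OF int_lam]) auto

lemma Phi_diff:
  assumes "k \<le> m"
  shows "real k * lam \<nu> m 1 \<le> Phi \<nu> m - Phi \<nu> (m - k)"
proof -
  have "Phi \<nu> m - Phi \<nu> (m - k) = integral\<^sup>L \<nu> (\<lambda>x. (1 - (1 - x) ^ m) - (1 - (1 - x) ^ (m - k)))"
    unfolding Phi_def by (rule Bochner_Integration.integral_diff[OF int_Phi int_Phi, symmetric])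
  moreover have "real k * lam \<nu> m 1 = integral\<^sup>L \<nu> (\<lambda>x. real k * (x ^ 1 * (1 - x) ^ (m - 1)))"
    unfolding lam_def by simp
  moreover have "integral\<^sup>L \<nu> (\<lambda>x. real k * (x ^ 1 * (1 - x) ^ (m - 1)))
      \<le> integral\<^sup>L \<nu> (\<lambda>x. (1 - (1 - x) ^ m) - (1 - (1 - x) ^ (m - k)))"
  proof (rule integral_mono_AE)
    show "integrable \<nu> (\<lambda>x. real k * (x ^ 1 * (1 - x) ^ (m - 1)))"
      using int_lam[of 1 m] by simp
    show "integrable \<nu> (\<lambda>x. (1 - (1 - x) ^ m) - (1 - (1 - x) ^ (m - k)))"
      using int_Phi int_Phi by (rule Bochner_Integration.integrable_diff)
    show "AE x in \<nu>. real k * (x ^ 1 * (1 - x) ^ (m - 1)) \<le> (1 - (1 - x) ^ m) - (1 - (1 - x) ^ (m - k))"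
      using AE01
    proof eventually_elim
      case (elim x)
      then show ?case using pow_diff_ge[of "1 - x" k m] assms by (simp add: algebra_simps)
    qed
  qed
  ultimately show ?thesis by linarith
qed

lemma binom_sum: "(\<Sum>k=1..m. real k * phi \<nu> m k) = real m * Phi \<nu> 1"
proof -
  have "(\<Sum>k=1..m. real k * phi \<nu> m k)
     = (\<Sum>k=1..m. integral\<^sup>L \<nu> (\<lambda>x. real k * real (m choose k) * (x ^ k * (1 - x) ^ (m - k))))"
    by (rule sum.cong) (simp_all add: phi_def lam_def)
  also have "\<dots> = integral\<^sup>L \<nu> (\<lambda>x. \<Sum>k=1..m. real k * real (m choose k) * (x ^ k * (1 - x) ^ (m - k)))"
    by (rule Bochner_Integration.integral_sum[symmetric]) (use int_lam in auto)
  also have "\<dots> = integral\<^sup>L \<nu> (\<lambda>x. real m * x)"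
    by (simp only: binom_mean)
  finally show ?thesis unfolding Phi1 integral_mult_right_zero .
qed

lemma key:
  "Phi \<nu> 1 * phi \<nu> m 1 \<le> (\<Sum>k=1..m. phi \<nu> m k * (Phi \<nu> m - Phi \<nu> (m - k)))"
proof -
  have "(\<Sum>k=1..m. phi \<nu> m k * (real k * lam \<nu> m 1)) \<le> (\<Sum>k=1..m. phi \<nu> m k * (Phi \<nu> m - Phi \<nu> (m - k)))"
    by (rule sum_mono, rule mult_left_mono) (use Phi_diff phi_nonneg in auto)
  moreover have "(\<Sum>k=1..m. phi \<nu> m k * (real k * lam \<nu> m 1)) = lam \<nu> m 1 * (\<Sum>k=1..m. real k * phi \<nu> m k)"
    by (simp add: sum_distrib_left algebra_simps)
  moreover have "phi \<nu> m 1 = real m * lam \<nu> m 1" by (simp add: phi_def)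
  ultimately show ?thesis unfolding binom_sum by (simp add: algebra_simps)
qed

lemma qrate_pos: "1 \<le> m \<Longrightarrow> 0 < qrate \<nu> m"
proof -
  assume m: "1 \<le> m"
  have "0 < phi \<nu> m 1" using m lam1_pos by (simp add: phi_def)
  also have "phi \<nu> m 1 \<le> qrate \<nu> m"
    unfolding qrate_def by (rule member_le_sum) (use m phi_nonneg in auto)
  finally show ?thesis .
qed

lemma pmf_jump:
  assumes m: "1 \<le> m"
  shows "pmf (jump_pmf \<nu> m) k = (if 1 \<le> k \<and> k \<le> m then phi \<nu> m k / qrate \<nu> m else 0)"
  unfolding jump_pmf_def
proof (rule pmf_embed_pmf)
  fix x :: nat
  show "0 \<le> (if 1 \<le> x \<and> x \<le> m then phi \<nu> m x / qrate \<nu> m else 0)"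
    using phi_nonneg qrate_pos[OF m] by simp
next
  have "(\<integral>\<^sup>+ x. ennreal (if 1 \<le> x \<and> x \<le> m then phi \<nu> m x / qrate \<nu> m else 0) \<partial>count_space UNIV)
      = (\<Sum>x\<in>{1..m}. ennreal (if 1 \<le> x \<and> x \<le> m then phi \<nu> m x / qrate \<nu> m else 0))"
    by (rule nn_integral_count_space') auto
  also have "\<dots> = (\<Sum>x\<in>{1..m}. ennreal (phi \<nu> m x / qrate \<nu> m))"
    by (rule sum.cong) auto
  also have "\<dots> = ennreal (\<Sum>x\<in>{1..m}. phi \<nu> m x / qrate \<nu> m)"
    using phi_nonneg qrate_pos[OF m] by (intro sum_ennreal) simp
  also have "(\<Sum>x\<in>{1..m}. phi \<nu> m x / qrate \<nu> m) = 1"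
    using qrate_pos[OF m] by (simp add: sum_divide_distrib[symmetric] qrate_def)
  finally show "(\<integral>\<^sup>+ x. ennreal (if 1 \<le> x \<and> x \<le> m then phi \<nu> m x / qrate \<nu> m else 0) \<partial>count_space UNIV) = 1"
    by simp
qed

lemma set_jump: "1 \<le> m \<Longrightarrow> set_pmf (jump_pmf \<nu> m) \<subseteq> {1..m}"
  by (auto simp: set_pmf_iff pmf_jump split: if_splits)

lemma jumps_fin: "finite (set_pmf (jumps_pmf \<nu> m))"
proof (induction m rule: less_induct)
  case (less m)
  show ?case
  proof (cases "m = 0")
    case True then show ?thesis by (subst jumps_pmf.simps) simp
  next
    case False
    then have m: "1 \<le> m" by simp
    have "finite (\<Union>k\<in>set_pmf (jump_pmf \<nu> m). set_pmf (map_pmf (Cons k) (jumps_pmf \<nu> (m - max 1 k))))"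
    proof (rule finite_UN_I)
      show "finite (set_pmf (jump_pmf \<nu> m))" using set_jump[OF m] finite_subset by blast
      fix k show "finite (set_pmf (map_pmf (Cons k) (jumps_pmf \<nu> (m - max 1 k))))"
        using less[of "m - max 1 k"] m by simp
    qed
    then show ?thesis using False by (subst jumps_pmf.simps) simp
  qed
qed

lemma EK1_0: "EK1 \<nu> 0 = 0"
  unfolding EK1_def by (subst jumps_pmf.simps) simp

lemma EK1_rec:
  assumes m: "1 \<le> m"
  shows "EK1 \<nu> m = (\<Sum>k=1..m. pmf (jump_pmf \<nu> m) k * ((if k = 1 then 1 else 0) + EK1 \<nu> (m - k)))"
proof -
  let ?g = "\<lambda>ks. real (length (filter (\<lambda>k. k = 1) ks))"
  have "EK1 \<nu> m = measure_pmf.expectation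
      (jump_pmf \<nu> m \<bind> (\<lambda>k. map_pmf (Cons k) (jumps_pmf \<nu> (m - max 1 k)))) ?g"
    unfolding EK1_def using m by (subst jumps_pmf.simps) simp
  also have "\<dots> = (\<Sum>k\<in>{1..m}. pmf (jump_pmf \<nu> m) k *\<^sub>R
      measure_pmf.expectation (map_pmf (Cons k) (jumps_pmf \<nu> (m - max 1 k))) ?g)"
    by (rule pmf_expectation_bind) (use set_jump[OF m] jumps_fin in auto)
  also have "\<dots> = (\<Sum>k=1..m. pmf (jump_pmf \<nu> m) k * ((if k = 1 then 1 else 0) + EK1 \<nu> (m - k)))"
  proof (rule sum.cong[OF refl])
    fix k assume k: "k \<in> {1..m}"
    have "measure_pmf.expectation (map_pmf (Cons k) (jumps_pmf \<nu> (m - max 1 k))) ?g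
        = measure_pmf.expectation (jumps_pmf \<nu> (m - k)) (\<lambda>ks. (if k = 1 then 1 else 0) + ?g ks)"
      using k by (simp add: max_def)
    also have "\<dots> = (if k = 1 then 1 else 0) + EK1 \<nu> (m - k)"
      unfolding EK1_def
      by (subst Bochner_Integration.integral_add) (auto intro: integrable_measure_pmf_finite jumps_fin)
    finally show "pmf (jump_pmf \<nu> m) k *\<^sub>R
      measure_pmf.expectation (map_pmf (Cons k) (jumps_pmf \<nu> (m - max 1 k))) ?g
      = pmf (jump_pmf \<nu> m) k * ((if k = 1 then 1 else 0) + EK1 \<nu> (m - k))" by simp
  qed
  finally show ?thesis .
qed

lemma EK1_bound: "EK1 \<nu> m \<le> Phi \<nu> m / Phi \<nu> 1"
proof (induction m rule: less_induct)
  case (less m)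
  show ?case
  proof (cases "m = 0")
    case True then show ?thesis by (simp add: EK1_0 Phi_def)
  next
    case False
    then have m: "1 \<le> m" by simp
    define p where "p = phi \<nu> m"
    define q where "q = qrate \<nu> m"
    define P1 where "P1 = Phi \<nu> 1"
    have q: "0 < q" using qrate_pos[OF m] by (simp add: q_def)
    have P1: "0 < P1" using Phi1_pos by (simp add: P1_def)
    have pn: "\<And>k. 0 \<le> p k" using phi_nonneg by (simp add: p_def)
    have "EK1 \<nu> m = (\<Sum>k=1..m. (p k / q) * ((if k = 1 then 1 else 0) + EK1 \<nu> (m - k)))"
      unfolding EK1_rec[OF m] by (rule sum.cong) (auto simp: pmf_jump[OF m] p_def q_def)
    also have "\<dots> \<le> (\<Sum>k=1..m. (p k / q) * ((if k = 1 then 1 else 0) + Phi \<nu> (m - k) / P1))"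
    proof (rule sum_mono)
      fix k assume k: "k \<in> {1..m}"
      have "EK1 \<nu> (m - k) \<le> Phi \<nu> (m - k) / P1" using less[of "m - k"] k by (simp add: P1_def)
      then show "(p k / q) * ((if k = 1 then 1 else 0) + EK1 \<nu> (m - k))
          \<le> (p k / q) * ((if k = 1 then 1 else 0) + Phi \<nu> (m - k) / P1)"
        using pn q by (intro mult_left_mono) auto
    qed
    also have "\<dots> = (\<Sum>k=1..m. p k * (if k = 1 then P1 else 0) + p k * Phi \<nu> (m - k)) / (q * P1)"
      unfolding sum_divide_distrib using q P1
      by (intro sum.cong refl) (auto simp: field_simps)
    also have "(\<Sum>k=1..m. p k * (if k = 1 then P1 else 0) + p k * Phi \<nu> (m - k))
        = p 1 * P1 + (\<Sum>k=1..m. p k * Phi \<nu> (m - k))"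
    proof -
      have "(\<Sum>k=1..m. p k * (if k = 1 then P1 else 0)) = (\<Sum>k=1..m. (if k = 1 then p 1 * P1 else 0))"
        by (rule sum.cong) auto
      also have "\<dots> = p 1 * P1" using m by (simp add: sum.delta)
      finally show ?thesis by (simp add: sum.distrib)
    qed
    also have "p 1 * P1 + (\<Sum>k=1..m. p k * Phi \<nu> (m - k)) \<le> q * Phi \<nu> m"
    proof -
      have "P1 * p 1 \<le> (\<Sum>k=1..m. p k * (Phi \<nu> m - Phi \<nu> (m - k)))"
        using key[of m] by (simp add: p_def P1_def)
      also have "\<dots> = q * Phi \<nu> m - (\<Sum>k=1..m. p k * Phi \<nu> (m - k))"
        by (simp add: q_def qrate_def p_def right_diff_distrib sum_subtractf sum_distrib_right)
      finally show ?thesis by (simp add: algebra_simps)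
    qed
    finally have "EK1 \<nu> m \<le> (q * Phi \<nu> m) / (q * P1)"
      using q P1 by (simp add: divide_right_mono)
    then show ?thesis using q by (simp add: P1_def)
  qed
qed

lemma main: "\<exists>c>0. \<forall>n::nat. EK1 \<nu> n \<le> c * Phi \<nu> n"
  by (rule exI[of _ "1 / Phi \<nu> 1"]) (use Phi1_pos EK1_bound in auto)

end

theorem mainTheorem10:
  fixes \<nu> :: "real measure"
  assumes "sets \<nu> = sets borel"
    and "emeasure \<nu> (- {0<..<1}) = 0"
    and "emeasure \<nu> {0<..<1} \<noteq> 0"
    and "(\<integral>\<^sup>+ x. ennreal x \<partial>\<nu>) < \<infinity>"
  shows "\<exists>c>0. \<forall>n::nat. EK1 \<nu> n \<le> c * Phi \<nu> n"
proof -
  interpret nuctx \<nu> using assms by unfold_locales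
  show ?thesis by (rule main)
qed

end
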